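(* Let $\mu$ be a fuzzy sub $\Gamma$-hypersemigroup of a fuzzy $\Gamma$-hypersemigroup $(M,\circ)$. Then $\mu$ is a fuzzy $\Gamma$-hyper bi-ideal of $(M,\circ)$ if and only if $(\mu\circ\alpha\circ\chi_M)\circ\beta\circ\mu\subseteq\mu$ for all $\alpha,\beta\in\Gamma$.
   Context: $M,\Gamma$ are nonempty sets; a fuzzy subset of $M$ is a map $M\to[0,1]$. A fuzzy $\Gamma$-hyperoperation assigns to each $(a,\gamma,b)\in M\times\Gamma\times M$ a fuzzy subset $a\circ\gamma\circ b$. For $a\in M$ and fuzzy $\mu$: $(a\circ\gamma\circ\mu)(r)=\bigvee_{t\in M}((a\circ\gamma\circ t)(r)\wedge\mu(t))$ if $\mu\ne0$, else $0$; $(\mu\circ\gamma\circ a)(r)=\bigvee_{t\in M}(\mu(t)\wedge(t\circ\gamma\circ a)(r))$ if $\mu\ne0$, else $0$. For fuzzy $\mu,\nu$: $(\mu\circ\gamma\circ\nu)(t)=\bigvee_{p,q\in M}(\mu(p)\wedge(p\circ\gamma\circ q)(t)\wedge\nu(q))$. $(M,\circ)$ is a fuzzy $\Gamma$-hypersemigroup if $(a\circ\alpha\circ b)\circ\beta\circ c=a\circ\alpha\circ(b\circ\beta\circ c)$ for all $a,b,c\in M$, $\alpha,\beta\in\Gamma$. $\chi_M$ is the constant function $1$. For fuzzy sets, $\mu\subseteq\nu$ means $\mu(x)\le\nu(x)$ for all $x$. A fuzzy sub $\Gamma$-hypersemigroup is a fuzzy subset $\mu$ with $\mu\circ\gamma\circ\mu\subseteq\mu$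 for all $\gamma\in\Gamma$. A fuzzy $\Gamma$-hyper bi-ideal is a fuzzy sub $\Gamma$-hypersemigroup $\mu$ with $(\mu\circ\alpha\circ y)\circ\beta\circ\mu\subseteq\mu$ for all $y\in M$, $\alpha,\beta\in\Gamma$. *)

theory Defs
  imports Main "HOL.Real"
begin

text \<open>M is the type 'm, Gamma is the type 'g (types are nonempty).
  Fuzzy subsets are real-valued maps with values in [0,1].\<close>

definition fuzzy :: "('m \<Rightarrow> real) \<Rightarrow> bool" where
  "fuzzy \<mu> \<longleftrightarrow> (\<forall>x. 0 \<le> \<mu> x \<and> \<mu> x \<le> 1)"

definition fuzzy_hyperop :: "('m \<Rightarrow> 'g \<Rightarrow> 'm \<Rightarrow> 'm \<Rightarrow> real) \<Rightarrow> bool" where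
  "fuzzy_hyperop H \<longleftrightarrow> (\<forall>a g b. fuzzy (H a g b))"

definition elem_fz :: "('m \<Rightarrow> 'g \<Rightarrow> 'm \<Rightarrow> 'm \<Rightarrow> real) \<Rightarrow> 'm \<Rightarrow> 'g \<Rightarrow> ('m \<Rightarrow> real) \<Rightarrow> 'm \<Rightarrow> real" where
  "elem_fz H a g \<mu> = (\<lambda>r. if \<mu> = (\<lambda>_. 0) then 0 else (SUP t. min (H a g t r) (\<mu> t)))"

definition fz_elem :: "('m \<Rightarrow> 'g \<Rightarrow> 'm \<Rightarrow> 'm \<Rightarrow> real) \<Rightarrow> ('m \<Rightarrow> real) \<Rightarrow> 'g \<Rightarrow> 'm \<Rightarrow> 'm \<Rightarrow> real" where
  "fz_elem H \<mu> g a = (\<lambda>r. if \<mu> = (\<lambda>_. 0) then 0 else (SUP t. min (\<mu> t) (H t g a r)))"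

definition fz_fz :: "('m \<Rightarrow> 'g \<Rightarrow> 'm \<Rightarrow> 'm \<Rightarrow> real) \<Rightarrow> ('m \<Rightarrow> real) \<Rightarrow> 'g \<Rightarrow> ('m \<Rightarrow> real) \<Rightarrow> 'm \<Rightarrow> real" where
  "fz_fz H \<mu> g \<nu> = (\<lambda>t. SUP pq. min (min (\<mu> (fst pq)) (H (fst pq) g (snd pq) t)) (\<nu> (snd pq)))"

definition fuzzy_Gamma_hypersemigroup :: "('m \<Rightarrow> 'g \<Rightarrow> 'm \<Rightarrow> 'm \<Rightarrow> real) \<Rightarrow> bool" where
  "fuzzy_Gamma_hypersemigroup H \<longleftrightarrow> fuzzy_hyperop H \<and>
     (\<forall>a b c \<alpha> \<beta>. fz_elem H (H a \<alpha> b) \<beta> c = elem_fz H a \<alpha> (H b \<beta> c))"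

definition chi_M :: "'m \<Rightarrow> real" where
  "chi_M = (\<lambda>_. 1)"

definition fsubset :: "('m \<Rightarrow> real) \<Rightarrow> ('m \<Rightarrow> real) \<Rightarrow> bool" where
  "fsubset \<mu> \<nu> \<longleftrightarrow> (\<forall>x. \<mu> x \<le> \<nu> x)"

definition fuzzy_sub_hypersemigroup :: "('m \<Rightarrow> 'g \<Rightarrow> 'm \<Rightarrow> 'm \<Rightarrow> real) \<Rightarrow> ('m \<Rightarrow> real) \<Rightarrow> bool" where
  "fuzzy_sub_hypersemigroup H \<mu> \<longleftrightarrow> fuzzy \<mu> \<and> (\<forall>g. fsubset (fz_fz H \<mu> g \<mu>) \<mu>)"

definition fuzzy_hyper_bi_ideal :: "('m \<Rightarrow> 'g \<Rightarrow> 'm \<Rightarrow> 'm \<Rightarrow> real) \<Rightarrow> ('m \<Rightarrow> real) \<Rightarrow> bool" where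
  "fuzzy_hyper_bi_ideal H \<mu> \<longleftrightarrow> fuzzy_sub_hypersemigroup H \<mu> \<and>
     (\<forall>y \<alpha> \<beta>. fsubset (fz_fz H (fz_elem H \<mu> \<alpha> y) \<beta> \<mu>) \<mu>)"

end

theory Submission
  imports Defs
begin

lemma fzfz_ge:
  assumes "\<forall>a g b r. H a g b r \<le> 1"
  shows "min (min (A p) (H p g q t)) (B q) \<le> fz_fz H A g B t"
proof -
  have "bdd_above (range (\<lambda>pq. min (min (A (fst pq)) (H (fst pq) g (snd pq) t)) (B (snd pq))))"
    using assms by (intro bdd_aboveI[where M=1]) (auto simp: min_le_iff_disj)
  then show ?thesis unfolding fz_fz_def
    using cSUP_upper[of "(p,q)" UNIV] by force
qed

lemma fzfz_le:
  assumes "\<And>p q. min (min (A p) (H p g q t)) (B q) \<le> c"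
  shows "fz_fz H A g B t \<le> c"
  unfolding fz_fz_def by (rule cSUP_least) (auto intro: assms)

lemma fzelem_ge:
  assumes "\<forall>a g b r. H a g b r \<le> 1" and "\<mu> \<noteq> (\<lambda>_. 0)"
  shows "min (\<mu> p) (H p g a r) \<le> fz_elem H \<mu> g a r"
proof -
  have "bdd_above (range (\<lambda>t. min (\<mu> t) (H t g a r)))"
    using assms(1) by (intro bdd_aboveI[where M=1]) (auto intro: min.coboundedI2)
  then show ?thesis unfolding fz_elem_def using assms(2) cSUP_upper[of p UNIV] by force
qed

theorem theorem4p12:
  fixes H :: "'m \<Rightarrow> 'g \<Rightarrow> 'm \<Rightarrow> 'm \<Rightarrow> real" and \<mu> :: "'m \<Rightarrow> real"
  assumes "fuzzy_Gamma_hypersemigroup H"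
    and "fuzzy_sub_hypersemigroup H \<mu>"
  shows "fuzzy_hyper_bi_ideal H \<mu> \<longleftrightarrow>
    (\<forall>\<alpha> \<beta>. fsubset (fz_fz H (fz_fz H \<mu> \<alpha> chi_M) \<beta> \<mu>) \<mu>)"
proof -
  have H1: "\<forall>a g b r. H a g b r \<le> 1" and H0: "\<And>a g b r. 0 \<le> H a g b r"
    using assms(1) unfolding fuzzy_Gamma_hypersemigroup_def fuzzy_hyperop_def fuzzy_def by auto
  have m0: "\<And>x. 0 \<le> \<mu> x" and m1: "\<And>x. \<mu> x \<le> 1"
    using assms(2) unfolding fuzzy_sub_hypersemigroup_def fuzzy_def by auto
  show ?thesis
  proof
    assume bi: "fuzzy_hyper_bi_ideal H \<mu>"
    have B: "\<And>y \<alpha> \<beta> t. fz_fz H (fz_elem H \<mu> \<alpha> y) \<beta> \<mu> t \<le> \<mu> t"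
      using bi unfolding fuzzy_hyper_bi_ideal_def fsubset_def by auto
    show "\<forall>\<alpha> \<beta>. fsubset (fz_fz H (fz_fz H \<mu> \<alpha> chi_M) \<beta> \<mu>) \<mu>"
    proof (intro allI, unfold fsubset_def, intro allI)
      fix \<alpha> \<beta> t
      show "fz_fz H (fz_fz H \<mu> \<alpha> chi_M) \<beta> \<mu> t \<le> \<mu> t"
      proof (rule fzfz_le)
        fix s q'
        show "min (min (fz_fz H \<mu> \<alpha> chi_M s) (H s \<beta> q' t)) (\<mu> q') \<le> \<mu> t"
        proof (cases "min (H s \<beta> q' t) (\<mu> q') \<le> \<mu> t")
          case True then show ?thesis by linarith
        next
          case False
          have "fz_fz H \<mu> \<alpha> chi_M s \<le> \<mu> t"
          proof (rule fzfz_le)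
            fix p q
            show "min (min (\<mu> p) (H p \<alpha> q s)) (chi_M q) \<le> \<mu> t"
            proof (cases "\<mu> = (\<lambda>_. 0)")
              case True then show ?thesis using m0[of t] H0[of p \<alpha> q s]
                by (simp add: chi_M_def)
            next
              case nz: False
              have "min (\<mu> p) (H p \<alpha> q s) \<le> fz_elem H \<mu> \<alpha> q s"
                by (rule fzelem_ge[OF H1 nz])
              moreover have "min (min (fz_elem H \<mu> \<alpha> q s) (H s \<beta> q' t)) (\<mu> q') \<le> \<mu> t"
                using fzfz_ge[OF H1, of "fz_elem H \<mu> \<alpha> q" s \<beta> q' t \<mu>] B[of \<alpha> q \<beta> t] by linarith
              ultimately show ?thesis using False by (simp add: chi_M_def)
            qed
          qed
          then show ?thesis by linarith
        qed
      qed
    qed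
  next
    assume R: "\<forall>\<alpha> \<beta>. fsubset (fz_fz H (fz_fz H \<mu> \<alpha> chi_M) \<beta> \<mu>) \<mu>"
    have le: "fz_elem H \<mu> \<alpha> y s \<le> fz_fz H \<mu> \<alpha> chi_M s" for \<alpha> y s
    proof (cases "\<mu> = (\<lambda>_. 0)")
      case True
      have "min (min (\<mu> y) (H y \<alpha> y s)) (chi_M y) \<le> fz_fz H \<mu> \<alpha> chi_M s"
        by (rule fzfz_ge[OF H1])
      then show ?thesis using True H0[of y \<alpha> y s] by (simp add: fz_elem_def chi_M_def)
    next
      case False
      show ?thesis unfolding fz_elem_def using False
      proof (simp, intro cSUP_least)
        fix t
        have "min (min (\<mu> t) (H t \<alpha> y s)) (chi_M y) \<le> fz_fz H \<mu> \<alpha> chi_M s"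
          by (rule fzfz_ge[OF H1])
        then show "min (\<mu> t) (H t \<alpha> y s) \<le> fz_fz H \<mu> \<alpha> chi_M s"
          using m1[of t] by (simp add: chi_M_def)
      qed simp
    qed
    have "fz_fz H (fz_elem H \<mu> \<alpha> y) \<beta> \<mu> t \<le> \<mu> t" for y \<alpha> \<beta> t
    proof (rule fzfz_le)
      fix p q
      have "min (min (fz_fz H \<mu> \<alpha> chi_M p) (H p \<beta> q t)) (\<mu> q) \<le> fz_fz H (fz_fz H \<mu> \<alpha> chi_M) \<beta> \<mu> t"
        by (rule fzfz_ge[OF H1])
      moreover have "fz_fz H (fz_fz H \<mu> \<alpha> chi_M) \<beta> \<mu> t \<le> \<mu> t" using R unfolding fsubset_def by auto
      ultimately show "min (min (fz_elem H \<mu> \<alpha> y p) (H p \<beta> q t)) (\<mu> q) \<le> \<mu> t"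
        using le[of \<alpha> y p] by linarith
    qed
    then show "fuzzy_hyper_bi_ideal H \<mu>"
      using assms(2) unfolding fuzzy_hyper_bi_ideal_def fsubset_def by auto
  qed
qed

end
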